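(* Suppose $F$ is locally Lipschitz continuous, in the sense that there is $L>0$ such that for every $x \in X$ there is a neighborhood $B_x\subset X$ of $x$ with $\|F(u) - F(v)\|_* \le L\|u - v\|$ for all $u, v \in B_x$. Then, regardless of the choice of the distance generating function $\omega$, the line search procedure in the N-EG-LS method is well-defined. Moreover, if $F$ is Lipschitz continuous, i.e. $\|F(x)-F(y)\|_*\le L\|x-y\|$ for all $x,y\in X$, then the line search procedure terminates in at most \[ \max\left\{1, \log_{1/\lambda}\frac{\alpha}{\sqrt{2}\gamma_0 L}\right\} \] steps, and \[ \gamma_k \ge \min\left\{\frac{\lambda\alpha}{\sqrt{2}L}, \gamma_0\right\} \quad \forall k\ge 1. \]
   Context: $\mathbb{R}^n$ carries an inner product $\langle\cdot,\cdot\rangle$ and a norm $\|\cdot\|$ (not necessarily induced by the inner product), with dual norm $\|\cdot\|_*$. $X \subseteq \mathbb{R}^n$ is a nonempty closed convex set and $F: X \to \mathbb{R}^n$ is continuous. A distance generating function with modulus $\alpha>0$ w.r.t. $\|\cdot\|$ is a function $\omega: X \to \mathbb{R}$ that is convex and continuous on $X$, such that $X^o = \{x \in X : \partial\omega(x) \neq \emptyset\}$ is convex, and such that $\omega$ restricted to $X^o$ is continuously differentiable and satisfies $\langle \nabla\omega(x') - \nabla\omega(x), x' - x\rangle \ge \alpha\|x'-x\|^2$ for all $x, x' \in X^o$. $V(x,z) = \omega(z) - \omega(x) - \langle \nabla\omega(x), z - x\rangle$, $P_x(\phi) = \arg\min_{z \in X}\{\langle \phi, z\rangle + V(x,z)\}$,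 $R_\gamma(x) = \frac{1}{\gamma}[x - P_x(\gamma F(x))]$. N-EG-LS method: input $x_1\in X$, $\gamma_0\in(0,1)$, $\lambda\in(0,1)$. For $k = 1,2,\ldots$: (Step 1) compute $R_{\gamma_0}(x_k)$; if $\|R_{\gamma_0}(x_k)\| = 0$ terminate; otherwise choose $\gamma_k$ as the largest element of $\{\gamma_0, \gamma_0\lambda, \gamma_0\lambda^2,\ldots\}$ such that $\|F(x_k) - F(y_k)\|_*^2 \le \frac{\alpha}{\gamma_k^2}V(x_k,y_k)$, where $y_k = P_{x_k}(\gamma_k F(x_k))$; then set $x_{k+1} = P_{x_k}(\gamma_k F(y_k))$. The line search procedure is called well-defined if (a) for every $k\ge1$ the choice of $\gamma_k$ above terminates after finitely many trial values, and (b) there exist $K\in\mathbb{N}$ and $\gamma^*>0$ with $\gamma_k \ge \gamma^*$ for all $k \ge K$. *)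

theory Defs
  imports "HOL-Analysis.Analysis"
begin

definition is_norm :: "('a::real_vector \<Rightarrow> real) \<Rightarrow> bool" where
  "is_norm N \<longleftrightarrow> (\<forall>x. N x = 0 \<longleftrightarrow> x = 0) \<and> (\<forall>c x. N (c *\<^sub>R x) = \<bar>c\<bar> * N x)
     \<and> (\<forall>x y. N (x + y) \<le> N x + N y)"

definition dual_norm :: "('a::real_inner \<Rightarrow> real) \<Rightarrow> 'a \<Rightarrow> real" where
  "dual_norm N \<phi> = Sup {inner \<phi> x | x. N x \<le> 1}"

definition subdiff :: "'a::real_inner set \<Rightarrow> ('a \<Rightarrow> real) \<Rightarrow> 'a \<Rightarrow> 'a set" where
  "subdiff X f x = {g. \<forall>z\<in>X. f z \<ge> f x + inner g (z - x)}"

definition dom_sub :: "'a::real_inner set \<Rightarrow> ('a \<Rightarrow> real) \<Rightarrow> 'a set" where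
  "dom_sub X \<omega> = {x \<in> X. subdiff X \<omega> x \<noteq> {}}"

text \<open>Distance generating function with modulus \<alpha> w.r.t. N; dw is the gradient of \<omega> on X^o.\<close>
definition dgf :: "'a::euclidean_space set \<Rightarrow> ('a \<Rightarrow> real) \<Rightarrow> real \<Rightarrow> ('a \<Rightarrow> real) \<Rightarrow> ('a \<Rightarrow> 'a) \<Rightarrow> bool" where
  "dgf X N \<alpha> \<omega> dw \<longleftrightarrow> \<alpha> > 0 \<and> convex_on X \<omega> \<and> continuous_on X \<omega> \<and> convex (dom_sub X \<omega>)
     \<and> (\<forall>x\<in>dom_sub X \<omega>. (\<omega> has_derivative (\<lambda>h. inner (dw x) h)) (at x within dom_sub X \<omega>)
                         \<and> dw x \<in> subdiff X \<omega> x)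
     \<and> continuous_on (dom_sub X \<omega>) dw
     \<and> (\<forall>x\<in>dom_sub X \<omega>. \<forall>x'\<in>dom_sub X \<omega>. inner (dw x' - dw x) (x' - x) \<ge> \<alpha> * (N (x' - x))\<^sup>2)"

definition bregman :: "('a::real_inner \<Rightarrow> real) \<Rightarrow> ('a \<Rightarrow> 'a) \<Rightarrow> 'a \<Rightarrow> 'a \<Rightarrow> real" where
  "bregman \<omega> dw x z = \<omega> z - \<omega> x - inner (dw x) (z - x)"

definition prox :: "'a::real_inner set \<Rightarrow> ('a \<Rightarrow> real) \<Rightarrow> ('a \<Rightarrow> 'a) \<Rightarrow> 'a \<Rightarrow> 'a \<Rightarrow> 'a" where
  "prox X \<omega> dw x \<phi> = arg_min_on (\<lambda>z. inner \<phi> z + bregman \<omega> dw x z) X"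

definition resid :: "'a::real_inner set \<Rightarrow> ('a \<Rightarrow> real) \<Rightarrow> ('a \<Rightarrow> 'a) \<Rightarrow> ('a \<Rightarrow> 'a) \<Rightarrow> real \<Rightarrow> 'a \<Rightarrow> 'a" where
  "resid X \<omega> dw F \<gamma> x = (1 / \<gamma>) *\<^sub>R (x - prox X \<omega> dw x (\<gamma> *\<^sub>R F x))"

definition ls_cond :: "'a::real_inner set \<Rightarrow> ('a \<Rightarrow> real) \<Rightarrow> real \<Rightarrow> ('a \<Rightarrow> real) \<Rightarrow> ('a \<Rightarrow> 'a) \<Rightarrow> ('a \<Rightarrow> 'a) \<Rightarrow> 'a \<Rightarrow> real \<Rightarrow> bool" where
  "ls_cond X N \<alpha> \<omega> dw F x \<gamma> \<longleftrightarrow>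
     (let y = prox X \<omega> dw x (\<gamma> *\<^sub>R F x) in
       (dual_norm N (F x - F y))\<^sup>2 \<le> \<alpha> / \<gamma>\<^sup>2 * bregman \<omega> dw x y)"

text \<open>xs, gs is the run of N-EG-LS (indices k \<ge> 1); step k is executed iff no earlier
  termination test fired.\<close>
definition active :: "'a::real_inner set \<Rightarrow> ('a \<Rightarrow> real) \<Rightarrow> ('a \<Rightarrow> real) \<Rightarrow> ('a \<Rightarrow> 'a) \<Rightarrow> ('a \<Rightarrow> 'a) \<Rightarrow> real \<Rightarrow> (nat \<Rightarrow> 'a) \<Rightarrow> nat \<Rightarrow> bool" where
  "active X N \<omega> dw F \<gamma>0 xs k \<longleftrightarrow> k \<ge> 1 \<and> (\<forall>j\<in>{1..k}. N (resid X \<omega> dw F \<gamma>0 (xs j)) \<noteq> 0)"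

definition neg_ls_run :: "'a::real_inner set \<Rightarrow> ('a \<Rightarrow> real) \<Rightarrow> real \<Rightarrow> ('a \<Rightarrow> real) \<Rightarrow> ('a \<Rightarrow> 'a) \<Rightarrow> ('a \<Rightarrow> 'a)
     \<Rightarrow> 'a \<Rightarrow> real \<Rightarrow> real \<Rightarrow> (nat \<Rightarrow> 'a) \<Rightarrow> (nat \<Rightarrow> real) \<Rightarrow> bool" where
  "neg_ls_run X N \<alpha> \<omega> dw F x1 \<gamma>0 lam xs gs \<longleftrightarrow> xs 1 = x1 \<and>
     (\<forall>k. active X N \<omega> dw F \<gamma>0 xs k \<longrightarrow>
        gs k = (GREATEST g. g \<in> range (\<lambda>m::nat. \<gamma>0 * lam ^ m) \<and> ls_cond X N \<alpha> \<omega> dw F (xs k) g)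
      \<and> xs (Suc k) = prox X \<omega> dw (xs k) (gs k *\<^sub>R F (prox X \<omega> dw (xs k) (gs k *\<^sub>R F (xs k)))))"

end

theory Submission
  imports Defs
begin


lemma normN_basic:
  assumes "is_norm N"
  shows "N 0 = 0" "N (- x) = N x" "N x \<ge> 0" "N (c *\<^sub>R x) = \<bar>c\<bar> * N x"
    "N (x + y) \<le> N x + N y" "N (x - y) = N (y - x)"
proof -
  show z: "N 0 = 0" using assms by (simp add: is_norm_def)
  show m: "N (- x) = N x" for x using assms unfolding is_norm_def
    by (metis abs_minus_cancel abs_one mult_1 scaleR_minus1_left)
  show "N (c *\<^sub>R x) = \<bar>c\<bar> * N x" using assms by (simp add: is_norm_def)
  show "N (x + y) \<le> N x + N y" using assms by (simp add: is_norm_def)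
  have "N (x + - x) \<le> N x + N (- x)" using assms unfolding is_norm_def by blast
  then show "N x \<ge> 0" using z m by simp
  show "N (x - y) = N (y - x)" using m[of "x - y"] by simp
qed

lemma normN_convex:
  assumes "is_norm N" shows "convex_on UNIV N"
proof (rule convex_onI)
  fix t :: real and x y assume t: "0 < t" "t < 1"
  have "N ((1 - t) *\<^sub>R x + t *\<^sub>R y) \<le> N ((1 - t) *\<^sub>R x) + N (t *\<^sub>R y)"
    using normN_basic[OF assms] by blast
  also have "\<dots> = (1 - t) * N x + t * N y" using normN_basic(4)[OF assms] t by simp
  finally show "N ((1 - t) *\<^sub>R x + t *\<^sub>R y) \<le> (1 - t) * N x + t * N y" .
qed simp

lemma normN_cont:
  fixes N :: "'a::euclidean_space \<Rightarrow> real"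
  assumes "is_norm N" shows "continuous_on UNIV N"
  using convex_on_continuous[OF open_UNIV normN_convex[OF assms]] .

lemma normN_lower:
  fixes N :: "'a::euclidean_space \<Rightarrow> real"
  assumes "is_norm N" shows "\<exists>c>0. \<forall>x. c * norm x \<le> N x"
proof -
  have cpt: "compact (sphere (0::'a) 1)" by simp
  have ne: "sphere (0::'a) 1 \<noteq> {}" by (simp add: sphere_eq_empty)
  obtain u where u: "u \<in> sphere 0 1" "\<And>y. y \<in> sphere 0 1 \<Longrightarrow> N u \<le> N y"
    using continuous_attains_inf[OF cpt ne continuous_on_subset[OF normN_cont[OF assms]]] by blast
  have "u \<noteq> 0" using u by auto
  then have pos: "N u > 0" using assms normN_basic(3)[OF assms, of u] unfolding is_norm_def
    by (metis order_le_less)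
  show ?thesis
  proof (intro exI[of _ "N u"] conjI allI pos)
    fix x :: 'a
    show "N u * norm x \<le> N x"
    proof (cases "x = 0")
      case True then show ?thesis by (simp add: normN_basic[OF assms])
    next
      case False
      have "N u \<le> N ((1 / norm x) *\<^sub>R x)" using u(2)[of "(1 / norm x) *\<^sub>R x"] False by simp
      also have "\<dots> = N x / norm x" using normN_basic(4)[OF assms] by simp
      finally show ?thesis using False by (simp add: field_simps)
    qed
  qed
qed

lemma dual_props:
  fixes N :: "'a::euclidean_space \<Rightarrow> real"
  assumes "is_norm N"
  shows "dual_norm N p \<ge> 0" "inner p x \<le> dual_norm N p * N x"
    "dual_norm N (a + b) \<le> dual_norm N a + dual_norm N b"
proof -
  obtain c where c: "c > 0" "\<And>x. c * norm x \<le> N x" using normN_lower[OF assms] by blast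
  have bdd: "bdd_above {inner q x | x. N x \<le> 1}" for q
  proof (rule bdd_aboveI)
    fix r assume "r \<in> {inner q x | x. N x \<le> 1}"
    then obtain x where x: "r = inner q x" "N x \<le> 1" by auto
    have "norm x \<le> 1 / c" using c(2)[of x] x(2) c(1) by (simp add: field_simps)
    have "r \<le> norm q * norm x" using x(1) norm_cauchy_schwarz by simp
    also have "\<dots> \<le> norm q * (1 / c)" using mult_left_mono[OF \<open>norm x \<le> 1 / c\<close> norm_ge_zero] by simp
    finally show "r \<le> norm q / c" by simp
  qed
  have mem: "inner q x \<in> {inner q x | x. N x \<le> 1}" if "N x \<le> 1" for q x using that by blast
  have up: "inner q x \<le> dual_norm N q" if "N x \<le> 1" for q x
    unfolding dual_norm_def by (rule cSup_upper[OF mem[OF that] bdd])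
  show "dual_norm N p \<ge> 0" using up[of 0 p] normN_basic(1)[OF assms] by simp
  show "inner p x \<le> dual_norm N p * N x"
  proof (cases "x = 0")
    case True then show ?thesis by (simp add: normN_basic[OF assms])
  next
    case False
    then have Np: "N x > 0" using assms normN_basic(3)[OF assms, of x] unfolding is_norm_def
      by (metis order_le_less)
    have "N ((1 / N x) *\<^sub>R x) = 1" using normN_basic(4)[OF assms] Np by simp
    then have "inner p ((1 / N x) *\<^sub>R x) \<le> dual_norm N p" using up[of "(1 / N x) *\<^sub>R x" p] by simp
    then show ?thesis using Np by (simp add: field_simps)
  qed
  show "dual_norm N (a + b) \<le> dual_norm N a + dual_norm N b"
    unfolding dual_norm_def[of N "a+b"]
  proof (rule cSup_least)
    show "{inner (a + b) x |x. N x \<le> 1} \<noteq> {}" using normN_basic(1)[OF assms] by (auto intro!: exI[of _ 0])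
    fix r assume "r \<in> {inner (a + b) x |x. N x \<le> 1}"
    then obtain x where "r = inner (a+b) x" "N x \<le> 1" by auto
    then show "r \<le> dual_norm N a + dual_norm N b" using up[of x a] up[of x b]
      by (simp add: inner_add_left)
  qed
qed



lemma dgfD:
  assumes "dgf X N \<alpha> \<omega> dw"
  shows "\<alpha> > 0" "convex_on X \<omega>" "continuous_on X \<omega>" "convex (dom_sub X \<omega>)"
    "dom_sub X \<omega> \<subseteq> X"
    "\<And>p w. p \<in> dom_sub X \<omega> \<Longrightarrow> w \<in> X \<Longrightarrow> \<omega> w \<ge> \<omega> p + inner (dw p) (w - p)"
    "\<And>x x'. x \<in> dom_sub X \<omega> \<Longrightarrow> x' \<in> dom_sub X \<omega> \<Longrightarrow> inner (dw x' - dw x) (x' - x) \<ge> \<alpha> * (N (x' - x))\<^sup>2"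
  using assms unfolding dgf_def dom_sub_def subdiff_def by auto

lemma limit_ineq:
  fixes a b c :: real
  assumes "\<And>n::nat. n \<ge> 1 \<Longrightarrow> a \<ge> b - c / real n"
  shows "a \<ge> b"
proof (rule ccontr)
  assume "\<not> a \<ge> b"
  then have d: "b - a > 0" by simp
  obtain n :: nat where n: "\<bar>c\<bar> / (b - a) < real n" using reals_Archimedean2 by blast
  have "n \<ge> 1" using n d by (metis abs_ge_zero divide_nonneg_pos less_one not_le not_less_iff_gr_or_eq of_nat_0 of_nat_less_iff order_le_less_trans)
  then have npos: "real n > 0" by simp
  have "\<bar>c\<bar> < real n * (b - a)" using n d by (simp add: field_simps)
  then have "c / real n < b - a" using npos by (simp add: field_simps)
  then show False using assms[OF \<open>n \<ge> 1\<close>] by simp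
qed

lemma sc_D:
  fixes N :: "'a::euclidean_space \<Rightarrow> real"
  assumes norm: "is_norm N" and dgf: "dgf X N \<alpha> \<omega> dw"
    and x: "x \<in> dom_sub X \<omega>" and z: "z \<in> dom_sub X \<omega>"
  shows "bregman \<omega> dw x z \<ge> \<alpha> / 2 * (N (z - x))\<^sup>2"
proof -
  define d where "d = z - x"
  define Nd where "Nd = N d"
  note D = dgfD[OF dgf]
  have key: "\<omega> z - \<omega> x \<ge> inner (dw x) d + \<alpha> * Nd\<^sup>2 / 2 - \<alpha> * Nd\<^sup>2 / 2 / real n" if n: "n \<ge> 1" for n :: nat
  proof -
    define p where "p j = (1 - real j / real n) *\<^sub>R x + (real j / real n) *\<^sub>R z" for j :: nat
    have pD: "p j \<in> dom_sub X \<omega>" if "j \<le> n" for j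
    proof -
      have "0 \<le> real j / real n" "real j / real n \<le> 1" using that n by auto
      then show ?thesis unfolding p_def using D(4) x z unfolding convex_alt by blast
    qed
    have px: "p j - x = (real j / real n) *\<^sub>R d" for j
      unfolding p_def d_def by (simp add: algebra_simps)
    have pstep: "p (Suc j) - p j = (1 / real n) *\<^sub>R d" for j
      unfolding p_def d_def using n by (simp add: algebra_simps add_divide_distrib)
    have p0: "p 0 = x" unfolding p_def by simp
    have pn: "p n = z" unfolding p_def using n by simp
    have ind: "\<omega> (p j) - \<omega> x \<ge> (real j / real n) * inner (dw x) d + \<alpha> * Nd\<^sup>2 * (real j * (real j - 1)) / (2 * (real n)\<^sup>2)"
      if "j \<le> n" for j
      using that
    proof (induction j)
      case 0 then show ?case using p0 by simp
    next
      case (Suc j)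
      then have jn: "j < n" by simp
      have IH: "\<omega> (p j) - \<omega> x \<ge> (real j / real n) * inner (dw x) d + \<alpha> * Nd\<^sup>2 * (real j * (real j - 1)) / (2 * (real n)\<^sup>2)"
        using Suc by simp
      have s1: "\<omega> (p (Suc j)) \<ge> \<omega> (p j) + (1 / real n) * inner (dw (p j)) d"
      proof -
        have "p (Suc j) \<in> X" using pD[of "Suc j"] D(5) Suc.prems by auto
        from D(6)[OF pD[of j] this] jn show ?thesis using pstep[of j] by simp
      qed
      have mono: "inner (dw (p j) - dw x) (p j - x) \<ge> \<alpha> * (N (p j - x))\<^sup>2"
        using D(7)[OF x pD[of j]] jn by simp
      have Npx: "N ((real j / real n) *\<^sub>R d) = real j / real n * Nd"
        unfolding Nd_def using normN_basic(4)[OF norm] by simp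
      have m2: "(real j / real n) * (inner (dw (p j) - dw x) d - \<alpha> * (real j / real n) * Nd\<^sup>2) \<ge> 0"
        using mono unfolding px Npx by (simp add: power2_eq_square algebra_simps)
      have m3: "inner (dw (p j)) d \<ge> inner (dw x) d + \<alpha> * (real j / real n) * Nd\<^sup>2"
      proof (cases "j = 0")
        case True then show ?thesis using p0 by simp
      next
        case False
        then have "real j / real n > 0" using n by simp
        then have "inner (dw (p j) - dw x) d - \<alpha> * (real j / real n) * Nd\<^sup>2 \<ge> 0"
          using m2 zero_le_mult_iff[of "real j / real n"] by (simp only:) linarith
        then show ?thesis by (simp add: inner_diff_left)
      qed
      have npos: "real n > 0" using n by simp
      have "(1 / real n) * inner (dw (p j)) d \<ge> (1 / real n) * (inner (dw x) d + \<alpha> * (real j / real n) * Nd\<^sup>2)"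
        using m3 npos by (simp add: divide_right_mono)
      then have "\<omega> (p (Suc j)) - \<omega> x \<ge> (real j / real n) * inner (dw x) d + \<alpha> * Nd\<^sup>2 * (real j * (real j - 1)) / (2 * (real n)\<^sup>2)
          + (1 / real n) * (inner (dw x) d + \<alpha> * (real j / real n) * Nd\<^sup>2)"
        using s1 IH by linarith
      moreover have "(real j / real n) * inner (dw x) d + \<alpha> * Nd\<^sup>2 * (real j * (real j - 1)) / (2 * (real n)\<^sup>2)
          + (1 / real n) * (inner (dw x) d + \<alpha> * (real j / real n) * Nd\<^sup>2)
          = (real (Suc j) / real n) * inner (dw x) d + \<alpha> * Nd\<^sup>2 * (real (Suc j) * (real (Suc j) - 1)) / (2 * (real n)\<^sup>2)"
        using npos by (simp add: field_simps power2_eq_square)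
      ultimately show ?case by simp
    qed
    have "\<omega> z - \<omega> x \<ge> inner (dw x) d + \<alpha> * Nd\<^sup>2 * (real n * (real n - 1)) / (2 * (real n)\<^sup>2)"
      using ind[of n] pn n by simp
    moreover have "\<alpha> * Nd\<^sup>2 * (real n * (real n - 1)) / (2 * (real n)\<^sup>2) = \<alpha> * Nd\<^sup>2 / 2 - \<alpha> * Nd\<^sup>2 / 2 / real n"
      using n by (simp add: field_simps power2_eq_square)
    ultimately show ?thesis by simp
  qed
  have "bregman \<omega> dw x z \<ge> \<alpha> * Nd\<^sup>2 / 2"
  proof (rule limit_ineq)
    fix n :: nat assume "n \<ge> 1"
    then show "bregman \<omega> dw x z \<ge> \<alpha> * Nd\<^sup>2 / 2 - \<alpha> * Nd\<^sup>2 / 2 / real n"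
      using key[of n] by (simp add: bregman_def d_def)
  qed
  then show ?thesis unfolding Nd_def d_def by simp
qed



lemma min_exists:
  fixes f :: "'a::euclidean_space \<Rightarrow> real"
  assumes X: "closed X" and z0: "z0 \<in> X" and f: "continuous_on X f" and a: "a > 0"
    and co: "\<And>z. z \<in> X \<Longrightarrow> f z - f z0 \<ge> a * (norm (z - z0))\<^sup>2 - b * norm (z - z0) - B"
  shows "\<exists>z\<in>X. \<forall>y\<in>X. f z \<le> f y"
proof -
  define R where "R = (\<bar>b\<bar> + \<bar>B\<bar>) / a + 1"
  have cK: "compact (X \<inter> cball z0 R)" by (intro closed_Int_compact X compact_cball)
  have nK: "X \<inter> cball z0 R \<noteq> {}" using z0 a by (auto simp: R_def intro!: exI[of _ z0])
  obtain z where z: "z \<in> X \<inter> cball z0 R" "\<And>y. y \<in> X \<inter> cball z0 R \<Longrightarrow> f z \<le> f y"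
    using continuous_attains_inf[OF cK nK continuous_on_subset[OF f]] by blast
  have "f z \<le> f y" if y: "y \<in> X" for y
  proof (cases "y \<in> cball z0 R")
    case True then show ?thesis using z y by blast
  next
    case False
    define r where "r = norm (y - z0)"
    have rR: "r > R" using False by (simp add: r_def dist_norm norm_minus_commute)
    have "(\<bar>b\<bar> + \<bar>B\<bar>) / a \<ge> 0" using a by simp
    then have r1: "r \<ge> 1" using rR unfolding R_def by linarith
    have "r > (\<bar>b\<bar> + \<bar>B\<bar>) / a" using rR unfolding R_def by linarith
    then have "a * r > \<bar>b\<bar> + \<bar>B\<bar>" using a by (simp add: pos_divide_less_eq mult.commute)
    then have "a * r * r > (\<bar>b\<bar> + \<bar>B\<bar>) * r" using r1 by (intro mult_strict_right_mono) auto
    moreover have "(\<bar>b\<bar> + \<bar>B\<bar>) * r \<ge> b * r + B"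
    proof -
      have "\<bar>b\<bar> * r \<ge> b * r" using r1 by (intro mult_right_mono) auto
      moreover have "\<bar>B\<bar> * r \<ge> \<bar>B\<bar>" using r1 by (simp add: mult_le_cancel_left1)
      ultimately show ?thesis by (simp add: distrib_right)
    qed
    ultimately have "a * r\<^sup>2 - b * r - B > 0" by (simp add: power2_eq_square algebra_simps)
    then have "f y > f z0" using co[OF y] by (simp add: r_def)
    moreover have "f z \<le> f z0" using z z0 a by (simp add: R_def)
    ultimately show ?thesis by simp
  qed
  then show ?thesis using z by blast
qed

lemma alg_aux:
  fixes t I C e :: real
  assumes "e > 0"
  shows "- ((2 * t * I + t\<^sup>2 * C) / (2 * e)) = t * (- (I / e) - t * (C / (2 * e)))"
  using assms by (simp add: field_simps power2_eq_square)

lemma dense_D: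
  fixes N :: "'a::euclidean_space \<Rightarrow> real"
  assumes norm: "is_norm N" and dgf: "dgf X N \<alpha> \<omega> dw"
    and X: "closed X" "convex X" and x1: "x1 \<in> dom_sub X \<omega>" and w: "w \<in> X"
  shows "w \<in> closure (dom_sub X \<omega>)"
  unfolding closure_approachable
proof (intro allI impI)
  fix e :: real assume e: "e > 0"
  note D = dgfD[OF dgf]
  define d where "d = dw x1"
  define B0 where "B0 = \<omega> w - \<omega> x1 - inner d (w - x1)"
  define K where "K = \<bar>B0\<bar> / e + norm d"
  have K0: "K \<ge> 0" using e by (simp add: K_def)
  define \<epsilon> where "\<epsilon> = e / (2 * (K + 1))"
  have \<epsilon>0: "\<epsilon> > 0" using e K0 by (simp add: \<epsilon>_def)
  define h where "h z = \<omega> z + (norm (z - w))\<^sup>2 / (2 * \<epsilon>)" for z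
  have x1X: "x1 \<in> X" using x1 D(5) by auto
  have lowb: "\<omega> z \<ge> \<omega> x1 + inner d (z - x1)" if "z \<in> X" for z
    using D(6)[OF x1 that] by (simp add: d_def)
  have hc: "continuous_on X h" unfolding h_def
    by (intro continuous_intros D(3)) (use \<epsilon>0 in auto)
  have co: "h z - h w \<ge> (1 / (2 * \<epsilon>)) * (norm (z - w))\<^sup>2 - norm d * norm (z - w) - B0" if z: "z \<in> X" for z
  proof -
    have "inner d (z - w) \<ge> - (norm d * norm (z - w))"
      using Cauchy_Schwarz_ineq2[of d "z - w"] by (auto simp: abs_le_iff)
    moreover have "inner d (z - x1) = inner d (z - w) + inner d (w - x1)" by (simp add: inner_diff_right)
    ultimately show ?thesis using lowb[OF z] by (simp add: h_def B0_def)
  qed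
  obtain z where zX: "z \<in> X" and zmin: "\<And>y. y \<in> X \<Longrightarrow> h z \<le> h y"
    using min_exists[OF X(1) w hc _ co] \<epsilon>0 by auto
  have sub: "\<omega> y \<ge> \<omega> z + inner ((1 / \<epsilon>) *\<^sub>R (w - z)) (y - z)" if y: "y \<in> X" for y
  proof -
    define c where "c = (norm (y - z))\<^sup>2 / (2 * \<epsilon>)"
    have "\<omega> y - \<omega> z \<ge> inner ((1 / \<epsilon>) *\<^sub>R (w - z)) (y - z) - c / real n" if n: "n \<ge> 1" for n :: nat
    proof -
      define t where "t = 1 / real n"
      have t: "0 < t" "t \<le> 1" using n by (auto simp: t_def)
      define zt where "zt = (1 - t) *\<^sub>R z + t *\<^sub>R y"
      have ztX: "zt \<in> X" using X(2) zX y t unfolding zt_def convex_alt by auto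
      have cv: "\<omega> zt \<le> (1 - t) * \<omega> z + t * \<omega> y"
        using convex_onD[OF D(2), of t z y] zX y t by (simp add: zt_def)
      have eq: "zt - w = (z - w) + t *\<^sub>R (y - z)" unfolding zt_def by (simp add: algebra_simps)
      have nq: "(norm (zt - w))\<^sup>2 = (norm (z - w))\<^sup>2 + 2 * t * inner (z - w) (y - z) + t\<^sup>2 * (norm (y - z))\<^sup>2"
        unfolding eq power2_norm_eq_inner by (simp add: inner_add_left inner_add_right inner_commute power2_eq_square algebra_simps)
      have "h z \<le> h zt" using zmin[OF ztX] .
      then have "\<omega> z + (norm (z - w))\<^sup>2 / (2 * \<epsilon>) \<le> (1 - t) * \<omega> z + t * \<omega> y + ((norm (z - w))\<^sup>2 + 2 * t * inner (z - w) (y - z) + t\<^sup>2 * (norm (y - z))\<^sup>2) / (2 * \<epsilon>)"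
        using cv nq unfolding h_def by simp
      moreover have "((norm (z - w))\<^sup>2 + 2 * t * inner (z - w) (y - z) + t\<^sup>2 * (norm (y - z))\<^sup>2) / (2 * \<epsilon>)
          = (norm (z - w))\<^sup>2 / (2 * \<epsilon>) + (2 * t * inner (z - w) (y - z) + t\<^sup>2 * (norm (y - z))\<^sup>2) / (2 * \<epsilon>)"
        by (simp add: add_divide_distrib)
      moreover have "(1 - t) * \<omega> z = \<omega> z - t * \<omega> z" "t * (\<omega> y - \<omega> z) = t * \<omega> y - t * \<omega> z"
        by (simp_all add: algebra_simps)
      ultimately have A: "t * (\<omega> y - \<omega> z) \<ge> - ((2 * t * inner (z - w) (y - z) + t\<^sup>2 * (norm (y - z))\<^sup>2) / (2 * \<epsilon>))"
        by linarith
      have Beq: "- ((2 * t * inner (z - w) (y - z) + t\<^sup>2 * (norm (y - z))\<^sup>2) / (2 * \<epsilon>))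
          = t * (inner ((1 / \<epsilon>) *\<^sub>R (w - z)) (y - z) - t * c)"
      proof -
        have "inner ((1 / \<epsilon>) *\<^sub>R (w - z)) (y - z) = - (inner (z - w) (y - z) / \<epsilon>)"
          by (simp add: inner_diff_left diff_divide_distrib)
        then show ?thesis using \<epsilon>0 unfolding c_def by (simp add: alg_aux)
      qed
      from A have "t * (\<omega> y - \<omega> z) \<ge> t * (inner ((1 / \<epsilon>) *\<^sub>R (w - z)) (y - z) - t * c)"
        unfolding Beq .
      then have "\<omega> y - \<omega> z \<ge> inner ((1 / \<epsilon>) *\<^sub>R (w - z)) (y - z) - t * c"
        using t by (simp add: mult_le_cancel_left_pos)
      then show ?thesis by (simp add: t_def)
    qed
    then have "\<omega> y - \<omega> z \<ge> inner ((1 / \<epsilon>) *\<^sub>R (w - z)) (y - z)" by (rule limit_ineq)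
    then show ?thesis by simp
  qed
  have zD: "z \<in> dom_sub X \<omega>" unfolding dom_sub_def subdiff_def using zX sub by blast
  define r where "r = norm (z - w)"
  have "h z \<le> h w" using zmin[OF w] .
  then have "\<omega> z + r\<^sup>2 / (2 * \<epsilon>) \<le> \<omega> w" by (simp add: h_def r_def)
  moreover have "\<omega> z \<ge> \<omega> x1 + inner d (z - x1)" using lowb[OF zX] .
  moreover have "inner d (z - x1) = inner d (z - w) + inner d (w - x1)" by (simp add: inner_diff_right)
  moreover have "inner d (z - w) \<ge> - (norm d * r)"
    using Cauchy_Schwarz_ineq2[of d "z - w"] unfolding r_def by (auto simp: abs_le_iff)
  ultimately have rr: "r\<^sup>2 / (2 * \<epsilon>) \<le> B0 + norm d * r" by (simp add: B0_def)
  have "r < e"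
  proof (rule ccontr)
    assume "\<not> r < e"
    then have re: "r \<ge> e" by simp
    then have rpos: "r > 0" using e by simp
    have A1: "r * r \<le> 2 * \<epsilon> * B0 + 2 * \<epsilon> * norm d * r"
    proof -
      have "r\<^sup>2 \<le> (B0 + norm d * r) * (2 * \<epsilon>)" using rr \<epsilon>0 by (simp add: pos_divide_le_eq)
      then show ?thesis by (simp add: power2_eq_square algebra_simps)
    qed
    have A2: "B0 \<le> \<bar>B0\<bar> / e * r"
    proof -
      have "r / e \<ge> 1" using re e by simp
      then have "\<bar>B0\<bar> * (r / e - 1) \<ge> 0" by simp
      moreover have "\<bar>B0\<bar> * (r / e - 1) = \<bar>B0\<bar> / e * r - \<bar>B0\<bar>" by (simp add: algebra_simps)
      ultimately show ?thesis by linarith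
    qed
    have A3: "2 * \<epsilon> * B0 \<le> 2 * \<epsilon> * (\<bar>B0\<bar> / e * r)" by (rule mult_left_mono[OF A2]) (use \<epsilon>0 in simp)
    have A4: "2 * \<epsilon> * B0 + 2 * \<epsilon> * norm d * r \<le> r * (2 * \<epsilon> * K)"
    proof -
      have "r * (2 * \<epsilon> * K) = 2 * \<epsilon> * (\<bar>B0\<bar> / e * r) + 2 * \<epsilon> * norm d * r"
        unfolding K_def by (simp add: distrib_left distrib_right mult.commute mult.left_commute)
      then show ?thesis using A3 by linarith
    qed
    have "r * r \<le> r * (2 * \<epsilon> * K)" using A1 A4 by linarith
    then have A5: "r \<le> 2 * \<epsilon> * K" using rpos by simp
    have A6: "2 * \<epsilon> * K < e"
    proof -
      have "K < K + 1" by simp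
      then have "K / (K + 1) < 1" using K0 by (subst divide_less_eq) auto
      moreover have "2 * \<epsilon> * K = e * (K / (K + 1))" unfolding \<epsilon>_def using K0 by (simp add: divide_simps)
      ultimately show ?thesis using e by (metis mult_less_cancel_left_pos mult.right_neutral)
    qed
    show False using A5 A6 re by simp
  qed
  then show "\<exists>y\<in>dom_sub X \<omega>. dist y w < e" using zD by (auto simp: dist_norm r_def)
qed



lemma sc_X:
  fixes N :: "'a::euclidean_space \<Rightarrow> real"
  assumes norm: "is_norm N" and dgf: "dgf X N \<alpha> \<omega> dw"
    and X: "closed X" "convex X" and x: "x \<in> dom_sub X \<omega>" and w: "w \<in> X"
  shows "bregman \<omega> dw x w \<ge> \<alpha> / 2 * (N (w - x))\<^sup>2"
proof -
  note D = dgfD[OF dgf]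
  define f where "f z = bregman \<omega> dw x z - \<alpha> / 2 * (N (z - x))\<^sup>2" for z
  have cl: "closure (dom_sub X \<omega>) \<subseteq> X" using D(5) X(1) by (rule closure_minimal)
  have fc: "continuous_on X f" unfolding f_def bregman_def
    by (intro continuous_intros D(3) continuous_on_compose2[OF normN_cont[OF norm]]) auto
  have "f w \<ge> 0"
  proof (rule continuous_ge_on_closure[of "dom_sub X \<omega>"])
    show "continuous_on (closure (dom_sub X \<omega>)) f" using continuous_on_subset[OF fc cl] .
    show "w \<in> closure (dom_sub X \<omega>)" using dense_D[OF norm dgf X x w] .
    show "f z \<ge> 0" if "z \<in> dom_sub X \<omega>" for z using sc_D[OF norm dgf x that] by (simp add: f_def)
  qed
  then show ?thesis by (simp add: f_def)
qed

lemma prox_props: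
  fixes N :: "'a::euclidean_space \<Rightarrow> real"
  assumes norm: "is_norm N" and dgf: "dgf X N \<alpha> \<omega> dw"
    and X: "closed X" "convex X" and x: "x \<in> dom_sub X \<omega>"
  shows "prox X \<omega> dw x \<phi> \<in> dom_sub X \<omega>"
proof -
  note D = dgfD[OF dgf]
  define f where "f z = inner \<phi> z + bregman \<omega> dw x z" for z
  have xX: "x \<in> X" using x D(5) by auto
  obtain c where c: "c > 0" "\<And>v. c * norm v \<le> N v" using normN_lower[OF norm] by blast
  have fc: "continuous_on X f" unfolding f_def bregman_def
    by (intro continuous_intros D(3))
  have co: "f z - f x \<ge> (\<alpha> * c\<^sup>2 / 2) * (norm (z - x))\<^sup>2 - norm \<phi> * norm (z - x) - 0" if z: "z \<in> X" for z
  proof -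
    have "bregman \<omega> dw x z \<ge> \<alpha> / 2 * (N (z - x))\<^sup>2" using sc_X[OF norm dgf X x z] .
    moreover have "(N (z - x))\<^sup>2 \<ge> (c * norm (z - x))\<^sup>2"
      using c(2)[of "z - x"] c(1) by (intro power_mono) auto
    moreover have "inner \<phi> (z - x) \<ge> - (norm \<phi> * norm (z - x))"
      using Cauchy_Schwarz_ineq2[of \<phi> "z - x"] by (auto simp: abs_le_iff)
    moreover have "bregman \<omega> dw x x = 0" by (simp add: bregman_def)
    moreover have "\<alpha> / 2 * (c * norm (z - x))\<^sup>2 = (\<alpha> * c\<^sup>2 / 2) * (norm (z - x))\<^sup>2"
      by (simp add: power_mult_distrib)
    ultimately show ?thesis using D(1) unfolding f_def
      by (smt (verit) inner_diff_right mult_left_mono divide_nonneg_pos)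
  qed
  have apos: "\<alpha> * c\<^sup>2 / 2 > 0" using D(1) c(1) by simp
  obtain z0 where z0: "z0 \<in> X" "\<And>y. y \<in> X \<Longrightarrow> f z0 \<le> f y"
    using min_exists[OF X(1) xX fc apos co] by blast
  have y: "prox X \<omega> dw x \<phi> \<in> X \<and> (\<forall>z\<in>X. f (prox X \<omega> dw x \<phi>) \<le> f z)"
    unfolding prox_def arg_min_on_def
    by (rule arg_minI[of "\<lambda>z. z \<in> X" z0]) (use z0 in \<open>auto simp: f_def not_less\<close>)
  define y' where "y' = prox X \<omega> dw x \<phi>"
  have "\<omega> z \<ge> \<omega> y' + inner (dw x - \<phi>) (z - y')" if "z \<in> X" for z
    using y that unfolding y'_def[symmetric] f_def bregman_def
    by (auto simp: inner_diff_left inner_diff_right algebra_simps)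
  then show ?thesis using y unfolding dom_sub_def subdiff_def y'_def by blast
qed



lemma dual_zero:
  fixes N :: "'a::euclidean_space \<Rightarrow> real"
  assumes norm: "is_norm N" shows "dual_norm N 0 = 0"
proof -
  have "{inner (0::'a) x | x. N x \<le> 1} = {0}" using normN_basic(1)[OF norm] by (auto intro!: exI[of _ 0])
  then show ?thesis by (simp add: dual_norm_def)
qed

lemma loc_glob:
  fixes N :: "'a::euclidean_space \<Rightarrow> real" and F :: "'a \<Rightarrow> 'a"
  assumes norm: "is_norm N" and X: "convex X"
    and loc: "\<forall>x\<in>X. \<exists>U. open U \<and> x \<in> U \<and>
               (\<forall>u\<in>U \<inter> X. \<forall>v\<in>U \<inter> X. dual_norm N (F u - F v) \<le> L * N (u - v))"
    and x: "x \<in> X" and y: "y \<in> X"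
  shows "dual_norm N (F x - F y) \<le> L * N (x - y)"
proof -
  define S where "S = closed_segment x y"
  define \<G> where "\<G> = {U. open U \<and> (\<forall>u\<in>U \<inter> X. \<forall>v\<in>U \<inter> X. dual_norm N (F u - F v) \<le> L * N (u - v))}"
  have SX: "S \<subseteq> X" unfolding S_def using closed_segment_subset[OF x y X] .
  have cS: "compact S" unfolding S_def by simp
  have cov: "S \<subseteq> \<Union>\<G>" using SX loc unfolding \<G>_def by blast
  obtain \<epsilon> where \<epsilon>: "\<epsilon> > 0" "\<And>p. p \<in> S \<Longrightarrow> \<exists>G\<in>\<G>. ball p \<epsilon> \<subseteq> G"
    using Heine_Borel_lemma[OF cS cov] unfolding \<G>_def by blast
  obtain n0 :: nat where n0: "norm (y - x) / \<epsilon> < real n0" using reals_Archimedean2 by blast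
  define n where "n = Suc n0"
  have npos: "real n > 0" by (simp add: n_def)
  have nb: "norm (y - x) / real n < \<epsilon>"
  proof -
    have "norm (y - x) / \<epsilon> < real n" using n0 by (simp add: n_def)
    then have "norm (y - x) < real n * \<epsilon>" using \<epsilon>(1) by (simp add: divide_less_eq)
    then show ?thesis using npos by (simp add: divide_less_eq mult.commute)
  qed
  define p where "p j = (1 - real j / real n) *\<^sub>R x + (real j / real n) *\<^sub>R y" for j :: nat
  have pS: "p j \<in> S" if "j \<le> n" for j
  proof -
    have "0 \<le> real j / real n" "real j / real n \<le> 1" using that npos by auto
    then show ?thesis unfolding p_def S_def closed_segment_def by blast
  qed
  have pstep: "p j - p (Suc j) = (- (1 / real n)) *\<^sub>R (y - x)" for j
    unfolding p_def by (simp add: algebra_simps add_divide_distrib)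
  have Nstep: "N (p j - p (Suc j)) = N (x - y) / real n" for j
    unfolding pstep using normN_basic(4)[OF norm, of "- (1 / real n)" "y - x"] normN_basic(6)[OF norm, of x y] npos
    by (simp del: scaleR_minus_left)
  have step: "dual_norm N (F (p j) - F (p (Suc j))) \<le> L * (N (x - y) / real n)" if j: "j < n" for j
  proof -
    obtain G where G: "G \<in> \<G>" "ball (p j) \<epsilon> \<subseteq> G" using \<epsilon>(2)[OF pS[of j]] j by auto
    have "p j \<in> G" using G(2) \<epsilon>(1) by auto
    moreover have "p (Suc j) \<in> G"
    proof -
      have "dist (p j) (p (Suc j)) = norm (y - x) / real n"
        unfolding dist_norm pstep using npos by simp
      then show ?thesis using G(2) nb by auto
    qed
    moreover have "p j \<in> X" "p (Suc j) \<in> X" using pS j SX by auto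
    ultimately have "dual_norm N (F (p j) - F (p (Suc j))) \<le> L * N (p j - p (Suc j))"
      using G(1) unfolding \<G>_def by blast
    then show ?thesis using Nstep[of j] by simp
  qed
  have ind: "dual_norm N (F x - F (p j)) \<le> L * (real j * (N (x - y) / real n))" if "j \<le> n" for j
    using that
  proof (induction j)
    case 0
    have "p 0 = x" by (simp add: p_def)
    then show ?case using dual_zero[OF norm] by simp
  next
    case (Suc j)
    have "dual_norm N (F x - F (p (Suc j))) \<le> dual_norm N (F x - F (p j)) + dual_norm N (F (p j) - F (p (Suc j)))"
      using dual_props(3)[OF norm, of "F x - F (p j)" "F (p j) - F (p (Suc j))"] by simp
    also have "\<dots> \<le> L * (real j * (N (x - y) / real n)) + L * (N (x - y) / real n)"
      using Suc step[of j] by (intro add_mono) auto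
    also have "\<dots> = L * (real (Suc j) * (N (x - y) / real n))" by (simp add: algebra_simps add_divide_distrib)
    finally show ?case .
  qed
  have "p n = y" using npos by (simp add: p_def)
  then show ?thesis using ind[of n] npos by simp
qed

lemma core:
  fixes N :: "'a::euclidean_space \<Rightarrow> real" and F :: "'a \<Rightarrow> 'a"
  assumes norm: "is_norm N" and dgf: "dgf X N \<alpha> \<omega> dw" and X: "closed X" "convex X"
    and L: "L > 0" and glob: "\<forall>x\<in>X. \<forall>y\<in>X. dual_norm N (F x - F y) \<le> L * N (x - y)"
    and x: "x \<in> dom_sub X \<omega>" and g: "0 < g" "g \<le> \<alpha> / (sqrt 2 * L)"
  shows "ls_cond X N \<alpha> \<omega> dw F x g"
proof -
  note D = dgfD[OF dgf]
  define y where "y = prox X \<omega> dw x (g *\<^sub>R F x)"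
  have yD: "y \<in> dom_sub X \<omega>" unfolding y_def by (rule prox_props[OF norm dgf X x])
  have xX: "x \<in> X" and yX: "y \<in> X" using x yD D(5) by auto
  define a where "a = dual_norm N (F x - F y)"
  define n where "n = N (x - y)"
  have a0: "a \<ge> 0" unfolding a_def by (rule dual_props(1)[OF norm])
  have aL: "a \<le> L * n" using glob xX yX by (simp add: a_def n_def)
  have n0: "n \<ge> 0" unfolding n_def by (rule normN_basic(3)[OF norm])
  have a2: "a\<^sup>2 \<le> L\<^sup>2 * n\<^sup>2" using power_mono[OF aL a0] by (simp add: power_mult_distrib)
  have V: "bregman \<omega> dw x y \<ge> \<alpha> / 2 * n\<^sup>2"
    using sc_D[OF norm dgf x yD] normN_basic(6)[OF norm, of x y] by (simp add: n_def)
  have "g * (sqrt 2 * L) \<le> \<alpha>" using g L by (simp add: le_divide_eq)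
  then have "(g * (sqrt 2 * L))\<^sup>2 \<le> \<alpha>\<^sup>2" using g L by (intro power_mono) auto
  then have gL: "2 * g\<^sup>2 * L\<^sup>2 \<le> \<alpha>\<^sup>2" by (simp add: power_mult_distrib)
  have "L\<^sup>2 \<le> \<alpha> / g\<^sup>2 * (\<alpha> / 2)" using gL g by (simp add: field_simps power2_eq_square)
  then have "L\<^sup>2 * n\<^sup>2 \<le> \<alpha> / g\<^sup>2 * (\<alpha> / 2) * n\<^sup>2" by (intro mult_right_mono) auto
  also have "\<dots> = \<alpha> / g\<^sup>2 * (\<alpha> / 2 * n\<^sup>2)" by simp
  also have "\<dots> \<le> \<alpha> / g\<^sup>2 * bregman \<omega> dw x y" using V D(1) g by (intro mult_left_mono) auto
  finally show ?thesis using a2 unfolding ls_cond_def Let_def y_def[symmetric] a_def by simp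
qed



lemma active_D:
  fixes N :: "'a::euclidean_space \<Rightarrow> real"
  assumes norm: "is_norm N" and dgf: "dgf X N \<alpha> \<omega> dw" and X: "closed X" "convex X"
    and x1: "x1 \<in> dom_sub X \<omega>"
    and run: "neg_ls_run X N \<alpha> \<omega> dw F x1 \<gamma>0 lam xs gs"
  shows "active X N \<omega> dw F \<gamma>0 xs k \<Longrightarrow> xs k \<in> dom_sub X \<omega>"
proof (induction k)
  case 0 then show ?case by (simp add: active_def)
next
  case (Suc k)
  show ?case
  proof (cases "k = 0")
    case True then show ?thesis using run x1 by (simp add: neg_ls_run_def)
  next
    case False
    then have ak: "active X N \<omega> dw F \<gamma>0 xs k" using Suc.prems by (auto simp: active_def)
    then have "xs k \<in> dom_sub X \<omega>" using Suc.IH by blast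
    moreover have "xs (Suc k) = prox X \<omega> dw (xs k) (gs k *\<^sub>R F (prox X \<omega> dw (xs k) (gs k *\<^sub>R F (xs k))))"
      using run ak by (simp add: neg_ls_run_def)
    ultimately show ?thesis using prox_props[OF norm dgf X] by simp
  qed
qed

lemma part2:
  fixes N :: "'a::euclidean_space \<Rightarrow> real" and F :: "'a \<Rightarrow> 'a"
  assumes norm: "is_norm N" and dgf: "dgf X N \<alpha> \<omega> dw" and X: "closed X" "convex X"
    and x1: "x1 \<in> dom_sub X \<omega>"
    and \<gamma>0: "0 < \<gamma>0" "\<gamma>0 < 1" and lam: "0 < lam" "lam < 1"
    and run: "neg_ls_run X N \<alpha> \<omega> dw F x1 \<gamma>0 lam xs gs"
    and L: "L > 0" and glob: "\<forall>x\<in>X. \<forall>y\<in>X. dual_norm N (F x - F y) \<le> L * N (x - y)"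
    and act: "active X N \<omega> dw F \<gamma>0 xs k"
  shows "(\<exists>m::nat. ls_cond X N \<alpha> \<omega> dw F (xs k) (\<gamma>0 * lam ^ m))"
    "real (LEAST m::nat. ls_cond X N \<alpha> \<omega> dw F (xs k) (\<gamma>0 * lam ^ m))
              \<le> max 1 (of_int \<lceil>log (1 / lam) (sqrt 2 * \<gamma>0 * L / \<alpha>)\<rceil>)"
    "gs k \<ge> min (lam * \<alpha> / (sqrt 2 * L)) \<gamma>0"
proof -
  note D = dgfD[OF dgf]
  define x where "x = xs k"
  have xD: "x \<in> dom_sub X \<omega>" unfolding x_def by (rule active_D[OF norm dgf X x1 run act])
  define Q where "Q m = ls_cond X N \<alpha> \<omega> dw F x (\<gamma>0 * lam ^ m)" for m :: nat
  define r where "r = sqrt 2 * \<gamma>0 * L / \<alpha>"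
  have rpos: "r > 0" using \<gamma>0 L D(1) by (simp add: r_def)
  define c where "c = \<lceil>log (1 / lam) r\<rceil>"
  define m1 where "m1 = nat c"
  have lc: "log (1 / lam) r \<le> real m1"
  proof -
    have "log (1 / lam) r \<le> of_int c" unfolding c_def by (rule le_of_int_ceiling)
    also have "\<dots> \<le> real m1" unfolding m1_def by linarith
    finally show ?thesis .
  qed
  have il: "1 / lam > 1" using lam by simp
  have "r = (1 / lam) powr (log (1 / lam) r)" by (rule powr_log_cancel[symmetric]) (use il rpos lam in auto)
  also have "\<dots> \<le> (1 / lam) powr (real m1)" using il lc by (intro powr_mono) auto
  also have "\<dots> = (1 / lam) ^ m1" by (rule powr_realpow) (use lam in simp)
  finally have rl: "r \<le> 1 / lam ^ m1" by (simp add: power_one_over)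
  have lpos: "lam ^ m1 > 0" using lam by simp
  have "\<gamma>0 * lam ^ m1 \<le> \<alpha> / (sqrt 2 * L)"
  proof -
    have "r * lam ^ m1 \<le> 1" using rl lpos by (simp add: le_divide_eq)
    then have "sqrt 2 * \<gamma>0 * L * lam ^ m1 \<le> \<alpha>" using D(1) by (simp add: r_def field_simps)
    then show ?thesis using L by (simp add: le_divide_eq field_simps)
  qed
  then have Qm1: "Q m1" unfolding Q_def
    by (intro core[OF norm dgf X L glob xD]) (use \<gamma>0 lam in auto)
  show "\<exists>m::nat. ls_cond X N \<alpha> \<omega> dw F (xs k) (\<gamma>0 * lam ^ m)"
    using Qm1 unfolding Q_def x_def by blast
  define m0 where "m0 = (LEAST m. Q m)"
  have Qm0: "Q m0" unfolding m0_def using Qm1 by (rule LeastI)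
  have m01: "m0 \<le> m1" unfolding m0_def using Qm1 by (rule Least_le)
  have "real m1 \<le> max 1 (of_int c)" unfolding m1_def by linarith
  then show "real (LEAST m::nat. ls_cond X N \<alpha> \<omega> dw F (xs k) (\<gamma>0 * lam ^ m))
              \<le> max 1 (of_int \<lceil>log (1 / lam) (sqrt 2 * \<gamma>0 * L / \<alpha>)\<rceil>)"
    using m01 unfolding m0_def Q_def x_def[symmetric] c_def r_def by linarith
  have gk: "gs k = (GREATEST g. g \<in> range (\<lambda>m::nat. \<gamma>0 * lam ^ m) \<and> ls_cond X N \<alpha> \<omega> dw F (xs k) g)"
    using run act by (simp add: neg_ls_run_def)
  have gs: "gs k = \<gamma>0 * lam ^ m0"
    unfolding gk
  proof (rule Greatest_equality)
    show "\<gamma>0 * lam ^ m0 \<in> range (\<lambda>m::nat. \<gamma>0 * lam ^ m) \<and> ls_cond X N \<alpha> \<omega> dw F (xs k) (\<gamma>0 * lam ^ m0)"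
      using Qm0 unfolding Q_def x_def by auto
    fix g assume "g \<in> range (\<lambda>m::nat. \<gamma>0 * lam ^ m) \<and> ls_cond X N \<alpha> \<omega> dw F (xs k) g"
    then obtain m where m: "g = \<gamma>0 * lam ^ m" "Q m" unfolding Q_def x_def by auto
    have "m0 \<le> m" unfolding m0_def using m(2) by (rule Least_le)
    then have "lam ^ m \<le> lam ^ m0" using lam by (intro power_decreasing) auto
    then show "g \<le> \<gamma>0 * lam ^ m0" using m(1) \<gamma>0 by simp
  qed
  show "gs k \<ge> min (lam * \<alpha> / (sqrt 2 * L)) \<gamma>0"
  proof (cases m0)
    case 0 then show ?thesis using gs by simp
  next
    case (Suc m')
    have "\<not> Q m'" using Suc unfolding m0_def by (metis lessI not_less_Least)
    then have "\<gamma>0 * lam ^ m' > \<alpha> / (sqrt 2 * L)"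
      using core[OF norm dgf X L glob xD, of "\<gamma>0 * lam ^ m'"] \<gamma>0 lam unfolding Q_def
      by (meson not_less mult_pos_pos zero_less_power)
    then have "lam * (\<gamma>0 * lam ^ m') > lam * (\<alpha> / (sqrt 2 * L))" using lam by (intro mult_strict_left_mono) auto
    then have "gs k > lam * \<alpha> / (sqrt 2 * L)" using gs Suc by (simp add: algebra_simps)
    then show ?thesis by simp
  qed
qed

theorem proposition5:
  fixes X :: "'a::euclidean_space set" and N :: "'a \<Rightarrow> real" and F :: "'a \<Rightarrow> 'a"
    and \<omega> :: "'a \<Rightarrow> real" and dw :: "'a \<Rightarrow> 'a" and \<alpha> \<gamma>0 lam :: real
    and x1 :: 'a and xs :: "nat \<Rightarrow> 'a" and gs :: "nat \<Rightarrow> real"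
  assumes norm: "is_norm N"
    and X: "X \<noteq> {}" "closed X" "convex X"
    and Fcont: "continuous_on X F"
    and dgf: "dgf X N \<alpha> \<omega> dw"
    and x1: "x1 \<in> dom_sub X \<omega>"
    and \<gamma>0: "0 < \<gamma>0" "\<gamma>0 < 1" and lam: "0 < lam" "lam < 1"
    and run: "neg_ls_run X N \<alpha> \<omega> dw F x1 \<gamma>0 lam xs gs"
  shows
    "(\<forall>L>0. (\<forall>x\<in>X. \<exists>U. open U \<and> x \<in> U \<and>
               (\<forall>u\<in>U \<inter> X. \<forall>v\<in>U \<inter> X. dual_norm N (F u - F v) \<le> L * N (u - v))) \<longrightarrow>
        (\<forall>k. active X N \<omega> dw F \<gamma>0 xs k \<longrightarrow> (\<exists>m::nat. ls_cond X N \<alpha> \<omega> dw F (xs k) (\<gamma>0 * lam ^ m)))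
      \<and> (\<exists>K::nat. \<exists>\<gamma>s>0. \<forall>k\<ge>K. active X N \<omega> dw F \<gamma>0 xs k \<longrightarrow> gs k \<ge> \<gamma>s))
   \<and> (\<forall>L>0. (\<forall>x\<in>X. \<forall>y\<in>X. dual_norm N (F x - F y) \<le> L * N (x - y)) \<longrightarrow>
        (\<forall>k. active X N \<omega> dw F \<gamma>0 xs k \<longrightarrow>
            real (LEAST m::nat. ls_cond X N \<alpha> \<omega> dw F (xs k) (\<gamma>0 * lam ^ m))
              \<le> max 1 (of_int \<lceil>log (1 / lam) (sqrt 2 * \<gamma>0 * L / \<alpha>)\<rceil>)
          \<and> gs k \<ge> min (lam * \<alpha> / (sqrt 2 * L)) \<gamma>0))"
proof (intro conjI allI impI)
  note P2 = part2[OF norm dgf X(2,3) x1 \<gamma>0 lam run]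
  fix L :: real assume L: "L > 0"
  {
    assume loc: "\<forall>x\<in>X. \<exists>U. open U \<and> x \<in> U \<and>
               (\<forall>u\<in>U \<inter> X. \<forall>v\<in>U \<inter> X. dual_norm N (F u - F v) \<le> L * N (u - v))"
    have glob: "\<forall>x\<in>X. \<forall>y\<in>X. dual_norm N (F x - F y) \<le> L * N (x - y)"
      using loc_glob[OF norm X(3) loc] by blast
    {
      fix k assume "active X N \<omega> dw F \<gamma>0 xs k"
      then show "\<exists>m::nat. ls_cond X N \<alpha> \<omega> dw F (xs k) (\<gamma>0 * lam ^ m)"
        using P2(1)[OF L glob] by blast
    }
    have pos: "min (lam * \<alpha> / (sqrt 2 * L)) \<gamma>0 > 0" using lam \<gamma>0 L dgfD(1)[OF dgf] by simp
    show "\<exists>K::nat. \<exists>\<gamma>s>0. \<forall>k\<ge>K. active X N \<omega> dw F \<gamma>0 xs k \<longrightarrow> gs k \<ge> \<gamma>s"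
      using P2(3)[OF L glob] pos by blast
  }
  {
    fix k assume glob: "\<forall>x\<in>X. \<forall>y\<in>X. dual_norm N (F x - F y) \<le> L * N (x - y)"
      and act: "active X N \<omega> dw F \<gamma>0 xs k"
    show "real (LEAST m::nat. ls_cond X N \<alpha> \<omega> dw F (xs k) (\<gamma>0 * lam ^ m))
              \<le> max 1 (of_int \<lceil>log (1 / lam) (sqrt 2 * \<gamma>0 * L / \<alpha>)\<rceil>)"
      using P2(2)[OF L glob act] .
    show "gs k \<ge> min (lam * \<alpha> / (sqrt 2 * L)) \<gamma>0" using P2(3)[OF L glob act] .
  }
qed

end
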